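(* Problem $(\overline{\mathrm{P}})$ is a restriction of problem (P). That is, whenever $(\mathbf{x}^0,\mathbf{x}^\uparrow,\mathbf{x}^\downarrow)$ together with some auxiliary variables is feasible for $(\overline{\mathrm{P}})$, there exist auxiliary variables with which $(\mathbf{x}^0,\mathbf{x}^\uparrow,\mathbf{x}^\downarrow)$ is feasible for (P). The two problems have the same objective.
   Context: Let $K$ be a positive integer, $\Delta t>0$, $T=K\Delta t$, $\mathcal{K}=\{1,\dots,K\}$, $0\le\underline y\le\bar y$, $\underline x\le0\le\bar x$, $\eta^{c},\eta^{d}\in(0,1)$, $\Delta\eta=1/\eta^{d}-\eta^{c}$, $y_0\ge0$ and $\gamma\in[0,T]$. Let $c$ and $\phi$ be real-valued cost functions. Problem (P) minimizes $c(\mathbf{x}^0,\mathbf{x}^\uparrow,\mathbf{x}^\downarrow)+\phi(\mathbf{x}^0,\mathbf{x}^\uparrow,\mathbf{x}^\downarrow,y_0)$. Its variables are $\mathbf{x}^0\in\mathbb{R}^K$; $\mathbf{x}^\uparrow,\mathbf{x}^\downarrow\in\mathbb{R}^K_+$; $\boldsymbol\alpha,\boldsymbol\beta\in\mathbb{R}^K$; $\underline{\boldsymbol\lambda},\bar{\boldsymbol\lambda}\in\mathbb{R}^K_+$; $\underline{\boldsymbol\Lambda}_k\in\mathbb{R}^k_+$ and $\bar{\boldsymbol\Lambda}_k\in\mathbb{R}^k$ for $k\in\mathcal{K}$; and $\upsilon_{1k},\upsilon_{2k}\in\{0,1\}$ for $k\le K-1$. Its constraints are: (a) $x^0_k+x^\uparrow_k\le\bar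 x$ and $x^0_k-x^\downarrow_k\ge\underline x$; (b) $y_0-\gamma\underline\lambda_k-\Delta t\sum_{l\le k}(\alpha_l+\underline\Lambda_{kl})\ge\underline y$; (c) $\alpha_k\ge\eta^{c}x^0_k$, $\alpha_k\ge x^0_k/\eta^{d}$, $\beta_k\ge\eta^{c}(x^0_k+x^\uparrow_k)$ and $\beta_k\ge(x^0_k+x^\uparrow_k)/\eta^{d}$; (d) $\underline\Lambda_{kl}+\underline\lambda_k+\alpha_l-\beta_l\ge0$ for $l\le k$; (e) $y_0+\gamma\bar\lambda_k+\Delta t\sum_{l\le k}\bar\Lambda_{kl}\le\bar y$; (f) $\bar\Lambda_{kk}\ge-\eta^{c}x^0_k$, $\bar\Lambda_{kk}\ge\eta^{c}(x^\downarrow_k-x^0_k)-\bar\lambda_k$ and $\bar\Lambda_{kk}\ge0$; (g) for $k\le K-1$: $(1-\upsilon_{1k})\underline x\le x^0_k-x^\downarrow_k\le\upsilon_{1k}\bar x$ and $\upsilon_{2k}\underline x\le x^0_k\le(1-\upsilon_{2k})\bar x$; (h) for $l<k$: - $\bar\Lambda_{kl}\ge\frac{x^\downarrow_l-x^0_l}{\eta^{d}}-\bar\lambda_k+(1-\upsilon_{1l})\Delta\eta\,\underline x$, - $\bar\Lambda_{kl}\ge-\frac{x^0_l}{\eta^{d}}+\upsilon_{2l}\Delta\eta\,\underline x$, - $\bar\Lambda_{kl}\ge\eta^{c}(x^\downarrow_l-x^0_l)-\bar\lambda_k-\upsilon_{1l}\Delta\eta\,\bar x$, - $\bar\Lambda_{kl}\ge-\eta^{c}x^0_l-(1-\upsilon_{2l})\Delta\eta\,\bar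 x$; (i) for $l<k$: $\bar\Lambda_{kl}x^\downarrow_l+\bar\lambda_kx^0_l\ge\upsilon_{2l}\frac{\underline x(\bar x-\underline x)}{\eta^{d}}-\upsilon_{1l}\frac{\bar x^2}{4\eta^{d}}$. All unqualified indices range over $\mathcal{K}$. Problem $(\overline{\mathrm{P}})$ has the same objective and variables as (P), plus additional binaries $\upsilon_{3k}\in\{0,1\}$ for $k\le K-1$. Its constraints are (a)–(h), without (i), together with: - for $k\le K-1$: $x^\downarrow_k-(1-\eta^{c}\eta^{d})x^0_k-\eta^{d}\bar\lambda_k\ge-((2-\eta^{c}\eta^{d})\bar x-\underline x)(1-\upsilon_{3k})$; - for $k\le K-1$: $x^\downarrow_k-(1-\eta^{c}\eta^{d})x^0_k-\eta^{d}\bar\lambda_k\le\upsilon_{3k}(\eta^{c}\eta^{d}\bar x-\underline x)$; - for $l<k$: $\bar\Lambda_{kl}\ge-\eta^{c}x^0_l-(\upsilon_{1l}+1-\upsilon_{3l})\Delta\eta\,\bar x$; - for $l<k$: $\bar\Lambda_{kl}\ge\frac{x^\downarrow_l-x^0_l}{\eta^{d}}-\bar\lambda_k+(\upsilon_{2l}+\upsilon_{3l})\Delta\eta\,\underline x$. *)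

theory Defs
  imports Complex_Main
begin

text \<open>Vectors indexed by 1..K are functions nat => real (values outside 1..K irrelevant).
  The triangular matrices Lambda_k (k in 1..K) are functions Lam k l, used for 1 <= l <= k.\<close>

definition dEta :: "real \<Rightarrow> real \<Rightarrow> real" where
  "dEta ec ed = 1 / ed - ec"

definition common_constr ::
  "nat \<Rightarrow> real \<Rightarrow> real \<Rightarrow> real \<Rightarrow> real \<Rightarrow> real \<Rightarrow> real \<Rightarrow> real \<Rightarrow> real \<Rightarrow> real \<Rightarrow>
   (nat \<Rightarrow> real) \<Rightarrow> (nat \<Rightarrow> real) \<Rightarrow> (nat \<Rightarrow> real) \<Rightarrow>
   (nat \<Rightarrow> real) \<Rightarrow> (nat \<Rightarrow> real) \<Rightarrow> (nat \<Rightarrow> real) \<Rightarrow> (nat \<Rightarrow> real) \<Rightarrow>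
   (nat \<Rightarrow> nat \<Rightarrow> real) \<Rightarrow> (nat \<Rightarrow> nat \<Rightarrow> real) \<Rightarrow> (nat \<Rightarrow> bool) \<Rightarrow> (nat \<Rightarrow> bool) \<Rightarrow> bool" where
  "common_constr K dt gam ylo yhi xlo xhi ec ed y0 x0 xu xd al be laL laU LaL LaU u1 u2 \<longleftrightarrow>
     (\<forall>k\<in>{1..K}. xu k \<ge> 0 \<and> xd k \<ge> 0 \<and> laL k \<ge> 0 \<and> laU k \<ge> 0 \<and> (\<forall>l\<in>{1..k}. LaL k l \<ge> 0)) \<and>
     \<comment> \<open>(a)\<close>
     (\<forall>k\<in>{1..K}. x0 k + xu k \<le> xhi \<and> x0 k - xd k \<ge> xlo) \<and>
     \<comment> \<open>(b)\<close>
     (\<forall>k\<in>{1..K}. y0 - gam * laL k - dt * (\<Sum>l=1..k. al l + LaL k l) \<ge> ylo) \<and>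
     \<comment> \<open>(c)\<close>
     (\<forall>k\<in>{1..K}. al k \<ge> ec * x0 k \<and> al k \<ge> x0 k / ed \<and>
        be k \<ge> ec * (x0 k + xu k) \<and> be k \<ge> (x0 k + xu k) / ed) \<and>
     \<comment> \<open>(d)\<close>
     (\<forall>k\<in>{1..K}. \<forall>l\<in>{1..k}. LaL k l + laL k + al l - be l \<ge> 0) \<and>
     \<comment> \<open>(e)\<close>
     (\<forall>k\<in>{1..K}. y0 + gam * laU k + dt * (\<Sum>l=1..k. LaU k l) \<le> yhi) \<and>
     \<comment> \<open>(f)\<close>
     (\<forall>k\<in>{1..K}. LaU k k \<ge> - ec * x0 k \<and> LaU k k \<ge> ec * (xd k - x0 k) - laU k \<and> LaU k k \<ge> 0) \<and>
     \<comment> \<open>(g)\<close>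
     (\<forall>k\<in>{1..K-1}. (1 - of_bool (u1 k)) * xlo \<le> x0 k - xd k \<and> x0 k - xd k \<le> of_bool (u1 k) * xhi \<and>
        of_bool (u2 k) * xlo \<le> x0 k \<and> x0 k \<le> (1 - of_bool (u2 k)) * xhi) \<and>
     \<comment> \<open>(h)\<close>
     (\<forall>k\<in>{1..K}. \<forall>l\<in>{1..<k}.
        LaU k l \<ge> (xd l - x0 l) / ed - laU k + (1 - of_bool (u1 l)) * dEta ec ed * xlo \<and>
        LaU k l \<ge> - x0 l / ed + of_bool (u2 l) * dEta ec ed * xlo \<and>
        LaU k l \<ge> ec * (xd l - x0 l) - laU k - of_bool (u1 l) * dEta ec ed * xhi \<and>
        LaU k l \<ge> - ec * x0 l - (1 - of_bool (u2 l)) * dEta ec ed * xhi)"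

definition feasible_P ::
  "nat \<Rightarrow> real \<Rightarrow> real \<Rightarrow> real \<Rightarrow> real \<Rightarrow> real \<Rightarrow> real \<Rightarrow> real \<Rightarrow> real \<Rightarrow> real \<Rightarrow>
   (nat \<Rightarrow> real) \<Rightarrow> (nat \<Rightarrow> real) \<Rightarrow> (nat \<Rightarrow> real) \<Rightarrow>
   (nat \<Rightarrow> real) \<Rightarrow> (nat \<Rightarrow> real) \<Rightarrow> (nat \<Rightarrow> real) \<Rightarrow> (nat \<Rightarrow> real) \<Rightarrow>
   (nat \<Rightarrow> nat \<Rightarrow> real) \<Rightarrow> (nat \<Rightarrow> nat \<Rightarrow> real) \<Rightarrow> (nat \<Rightarrow> bool) \<Rightarrow> (nat \<Rightarrow> bool) \<Rightarrow> bool" where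
  "feasible_P K dt gam ylo yhi xlo xhi ec ed y0 x0 xu xd al be laL laU LaL LaU u1 u2 \<longleftrightarrow>
     common_constr K dt gam ylo yhi xlo xhi ec ed y0 x0 xu xd al be laL laU LaL LaU u1 u2 \<and>
     \<comment> \<open>(i)\<close>
     (\<forall>k\<in>{1..K}. \<forall>l\<in>{1..<k}.
        LaU k l * xd l + laU k * x0 l \<ge>
          of_bool (u2 l) * (xlo * (xhi - xlo) / ed) - of_bool (u1 l) * (xhi\<^sup>2 / (4 * ed)))"

definition feasible_Pbar ::
  "nat \<Rightarrow> real \<Rightarrow> real \<Rightarrow> real \<Rightarrow> real \<Rightarrow> real \<Rightarrow> real \<Rightarrow> real \<Rightarrow> real \<Rightarrow> real \<Rightarrow>
   (nat \<Rightarrow> real) \<Rightarrow> (nat \<Rightarrow> real) \<Rightarrow> (nat \<Rightarrow> real) \<Rightarrow>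
   (nat \<Rightarrow> real) \<Rightarrow> (nat \<Rightarrow> real) \<Rightarrow> (nat \<Rightarrow> real) \<Rightarrow> (nat \<Rightarrow> real) \<Rightarrow>
   (nat \<Rightarrow> nat \<Rightarrow> real) \<Rightarrow> (nat \<Rightarrow> nat \<Rightarrow> real) \<Rightarrow> (nat \<Rightarrow> bool) \<Rightarrow> (nat \<Rightarrow> bool) \<Rightarrow>
   (nat \<Rightarrow> bool) \<Rightarrow> bool" where
  "feasible_Pbar K dt gam ylo yhi xlo xhi ec ed y0 x0 xu xd al be laL laU LaL LaU u1 u2 u3 \<longleftrightarrow>
     common_constr K dt gam ylo yhi xlo xhi ec ed y0 x0 xu xd al be laL laU LaL LaU u1 u2 \<and>
     (\<forall>k\<in>{1..K-1}.
        xd k - (1 - ec * ed) * x0 k - ed * laU k \<ge> - ((2 - ec * ed) * xhi - xlo) * (1 - of_bool (u3 k)) \<and>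
        xd k - (1 - ec * ed) * x0 k - ed * laU k \<le> of_bool (u3 k) * (ec * ed * xhi - xlo)) \<and>
     (\<forall>k\<in>{1..K}. \<forall>l\<in>{1..<k}.
        LaU k l \<ge> - ec * x0 l - (of_bool (u1 l) + 1 - of_bool (u3 l)) * dEta ec ed * xhi \<and>
        LaU k l \<ge> (xd l - x0 l) / ed - laU k + (of_bool (u2 l) + of_bool (u3 l)) * dEta ec ed * xlo)"

definition objective ::
  "((nat \<Rightarrow> real) \<Rightarrow> (nat \<Rightarrow> real) \<Rightarrow> (nat \<Rightarrow> real) \<Rightarrow> real) \<Rightarrow>
   ((nat \<Rightarrow> real) \<Rightarrow> (nat \<Rightarrow> real) \<Rightarrow> (nat \<Rightarrow> real) \<Rightarrow> real \<Rightarrow> real) \<Rightarrow>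
   (nat \<Rightarrow> real) \<Rightarrow> (nat \<Rightarrow> real) \<Rightarrow> (nat \<Rightarrow> real) \<Rightarrow> real \<Rightarrow> real" where
  "objective c phi x0 xu xd y0 = c x0 xu xd + phi x0 xu xd y0"

end

theory Submission
  imports Defs
begin

lemma lemI:
  fixes ec ed xlo xhi x0 xd L lam lam' :: real
  assumes "0<ec" "ec<1" "0<ed" "ed<1" "xlo\<le>0" "0\<le>xhi" "xd\<ge>0" "x0 \<le> xhi" "x0 - xd \<ge> xlo"
    "(1 - of_bool u1) * xlo \<le> x0 - xd" "x0 - xd \<le> of_bool u1 * xhi"
    "of_bool u2 * xlo \<le> x0" "x0 \<le> (1 - of_bool u2) * xhi"
    and lam0: "lam \<ge> 0"
    and h1: "L \<ge> (xd - x0) / ed - lam' + (1 - of_bool u1) * dEta ec ed * xlo"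
    and h2: "L \<ge> - x0 / ed + of_bool u2 * dEta ec ed * xlo"
    and h3: "L \<ge> ec * (xd - x0) - lam' - of_bool u1 * dEta ec ed * xhi"
    and h4: "L \<ge> - ec * x0 - (1 - of_bool u2) * dEta ec ed * xhi"
    and x1: "L \<ge> - ec * x0 - (of_bool u1 + 1 - of_bool u3) * dEta ec ed * xhi"
    and x2: "L \<ge> (xd - x0) / ed - lam + (of_bool u2 + of_bool u3) * dEta ec ed * xlo"
    and lm: "lam' = min lam ((xhi - xlo)/ed)"
  shows "L * xd + lam' * x0 \<ge> of_bool u2 * (xlo * (xhi - xlo) / ed) - of_bool u1 * (xhi\<^sup>2 / (4 * ed))"
proof -
  have "ec*ed \<le> 1" using assms by (simp add: mult_le_one)
  then have D: "dEta ec ed \<le> 1/ed" "dEta ec ed \<ge> 0" using assms by (auto simp: dEta_def field_simps)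
  have M0: "(xhi - xlo)/ed \<ge> 0" using assms by simp
  have lam'0: "lam' \<ge> 0" "lam' \<le> (xhi - xlo)/ed" using lm lam0 M0 by auto
  show ?thesis
  proof (cases u1; cases u2)
    assume "u1" "u2"
    then have "x0 = 0" "xd = 0" using assms by auto
    have "xlo * (xhi - xlo) \<le> 0" using assms by (simp add: mult_nonpos_nonneg)
    then have "xlo * (xhi - xlo) / ed \<le> 0" using assms by (simp add: divide_nonpos_pos)
    moreover have "xhi\<^sup>2 / (4 * ed) \<ge> 0" using assms by simp
    ultimately show ?thesis using \<open>u1\<close> \<open>u2\<close> \<open>x0 = 0\<close> \<open>xd = 0\<close> by simp
  next
    assume "\<not>u1" "u2"
    then have x0n: "x0 \<le> 0" "xlo \<le> x0" using assms by auto
    have "ec * x0 \<le> 0" using x0n assms by (simp add: mult_nonneg_nonpos)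
    then have "L \<ge> 0" using h4 \<open>u2\<close> by simp
    then have a: "L * xd \<ge> 0" using assms by simp
    have b: "lam' * x0 \<ge> (xhi - xlo)/ed * x0" using mult_right_mono_neg[OF lam'0(2) x0n(1)] by simp
    have c: "(xhi - xlo)/ed * x0 \<ge> (xhi - xlo)/ed * xlo" using mult_left_mono[OF x0n(2) M0] by simp
    show ?thesis using a b c \<open>\<not>u1\<close> \<open>u2\<close> by (simp add: field_simps)
  next
    assume "u1" "\<not>u2"
    then have xs: "0 \<le> xd" "xd \<le> x0" "x0 \<le> xhi" using assms by auto
    have h1': "lam' \<ge> (xd - x0) / ed - L" using h1 \<open>u1\<close> by simp
    have key: "L * xd + lam' * x0 \<ge> (xd - x0) / ed * xd"
    proof (cases "L \<ge> (xd - x0) / ed")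
      case True
      then have "L * xd \<ge> (xd - x0) / ed * xd" using mult_right_mono[OF True xs(1)] by simp
      moreover have "lam' * x0 \<ge> 0" using lam'0 xs by simp
      ultimately show ?thesis by linarith
    next
      case False
      define t where "t = (xd - x0) / ed"
      have A: "lam' * x0 \<ge> (t - L) * x0" using mult_right_mono[OF h1', of x0] xs t_def by simp
      have B: "L * (xd - x0) \<ge> t * (xd - x0)"
        using mult_right_mono_neg[of L t "xd - x0"] False xs t_def by simp
      have A': "lam' * x0 \<ge> t * x0 - L * x0" using A by (simp add: algebra_simps)
      have B': "L * xd - L * x0 \<ge> t * xd - t * x0" using B by (simp add: algebra_simps)
      have "t * xd \<le> L * xd + lam' * x0" using A' B' by linarith
      then show ?thesis using t_def by simp
    qed
    have sq: "(xd - x0) * xd \<ge> - (x0\<^sup>2 / 4)"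
    proof -
      have "(x0 - 2*xd)\<^sup>2 \<ge> 0" by simp
      then show ?thesis by (simp add: power2_eq_square algebra_simps)
    qed
    have "x0\<^sup>2 \<le> xhi\<^sup>2" using xs by (simp add: power_mono)
    then have sq2: "(xd - x0) * xd \<ge> - (xhi\<^sup>2 / 4)" using sq by linarith
    have "(xd - x0) * xd / ed \<ge> - (xhi\<^sup>2 / 4) / ed" using divide_right_mono[OF sq2, of ed] assms(3) by simp
    moreover have "- (xhi\<^sup>2 / 4) / ed = - (xhi\<^sup>2 / (4 * ed))" by simp
    moreover have "(xd - x0) / ed * xd = (xd - x0) * xd / ed" by simp
    ultimately show ?thesis using key \<open>u1\<close> \<open>\<not>u2\<close> by simp
  next
    assume "\<not>u1" "\<not>u2"
    then have xs: "0 \<le> x0" "x0 \<le> xd" using assms by auto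
    show ?thesis
    proof (cases "L \<ge> 0")
      case True
      then show ?thesis using xs lam'0 \<open>\<not>u1\<close> \<open>\<not>u2\<close> assms by simp
    next
      case False
      show ?thesis
      proof (cases u3)
        case False
        have t1: "(xd - x0) / ed - L \<le> lam" using x2 False \<open>\<not>u2\<close> by simp
        have "(xd - x0) / ed - L \<le> xd / ed" using h2 \<open>\<not>u2\<close> by (simp add: diff_divide_distrib)
        also have "\<dots> \<le> (xhi - xlo)/ed" using assms by (simp add: divide_right_mono)
        finally have t2: "(xd - x0) / ed - L \<le> lam'" using t1 lm by simp
        have "lam' * x0 \<ge> ((xd - x0) / ed - L) * x0" using mult_right_mono[OF t2 xs(1)] by simp
        moreover have "(xd - x0) * (L + x0/ed) \<ge> 0" using h2 \<open>\<not>u2\<close> xs by simp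
        ultimately show ?thesis using \<open>\<not>u1\<close> \<open>\<not>u2\<close> by (simp add: field_simps)
      next
        case True
        have t1: "ec * (xd - x0) - L \<le> lam'" using h3 \<open>\<not>u1\<close> by simp
        have "lam' * x0 \<ge> (ec * (xd - x0) - L) * x0" using mult_right_mono[OF t1 xs(1)] by simp
        moreover have "(xd - x0) * (L + ec * x0) \<ge> 0" using x1 True \<open>\<not>u1\<close> xs by simp
        ultimately show ?thesis using \<open>\<not>u1\<close> \<open>\<not>u2\<close> by (simp add: field_simps)
      qed
    qed
  qed
qed

lemma termA:
  fixes ec ed xlo xhi x0 xd L :: real
  assumes "0<ec" "ec<1" "0<ed" "ed<1" "xlo\<le>0" "0\<le>xhi" "xd\<ge>0" "x0 \<le> xhi" "x0 - xd \<ge> xlo"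
    "(1 - of_bool u1) * xlo \<le> x0 - xd" "x0 - xd \<le> of_bool u1 * xhi"
    "of_bool u2 * xlo \<le> x0" "x0 \<le> (1 - of_bool u2) * xhi"
    "L \<ge> - x0 / ed + of_bool u2 * dEta ec ed * xlo"
  shows "(xd - x0) / ed - L + (1 - of_bool u1) * dEta ec ed * xlo \<le> (xhi - xlo)/ed"
proof -
  have "ec*ed \<le> 1" using assms by (simp add: mult_le_one)
  then have D: "dEta ec ed \<le> 1/ed" "dEta ec ed \<ge> 0" using assms by (auto simp: dEta_def field_simps)
  have "(xd - x0) / ed - L + (1 - of_bool u1) * dEta ec ed * xlo \<le> xd/ed + (1 - of_bool u1 - of_bool u2) * dEta ec ed * xlo"
    using assms(14) by (cases u1; cases u2; simp add: diff_divide_distrib algebra_simps)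
  also have "\<dots> \<le> (xhi - xlo)/ed"
  proof (cases u1; cases u2)
    assume "u1" "u2" then have "xd = 0" using assms by simp
    have "dEta ec ed * xlo \<ge> 1/ed * xlo" using mult_right_mono_neg[OF D(1) assms(5)] .
    moreover have "xhi / ed \<ge> 0" using assms by simp
    ultimately show ?thesis using \<open>xd = 0\<close> \<open>u1\<close> \<open>u2\<close> by (simp add: diff_divide_distrib)
  next
    assume "u1" "\<not>u2" then show ?thesis using assms D by (simp add: divide_right_mono)
  next
    assume "\<not>u1" "u2" then show ?thesis using assms D by (simp add: divide_right_mono)
  next
    assume "\<not>u1" "\<not>u2"
    have "xd \<le> xhi - xlo" using assms by linarith
    then have "xd / ed \<le> (xhi - xlo)/ed" using assms(3) by (simp add: divide_right_mono)
    then show ?thesis using \<open>\<not>u1\<close> \<open>\<not>u2\<close> assms D mult_nonneg_nonpos[of "dEta ec ed" xlo] by simp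
  qed
  finally show ?thesis .
qed

lemma termB:
  fixes ec ed xlo xhi x0 xd L :: real
  assumes "0<ec" "ec<1" "0<ed" "ed<1" "xlo\<le>0" "0\<le>xhi" "xd\<ge>0" "x0 \<le> xhi" "x0 - xd \<ge> xlo"
    "(1 - of_bool u1) * xlo \<le> x0 - xd" "x0 - xd \<le> of_bool u1 * xhi"
    "of_bool u2 * xlo \<le> x0" "x0 \<le> (1 - of_bool u2) * xhi"
    "L \<ge> - ec * x0 - (1 - of_bool u2) * dEta ec ed * xhi"
  shows "ec * (xd - x0) - L - of_bool u1 * dEta ec ed * xhi \<le> (xhi - xlo)/ed"
proof -
  have "ec*ed \<le> 1" using assms by (simp add: mult_le_one)
  then have D: "dEta ec ed \<le> 1/ed" "dEta ec ed \<ge> 0" using assms by (auto simp: dEta_def field_simps)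
  have sum: "ec + dEta ec ed = 1/ed" by (simp add: dEta_def)
  have xdb: "xd \<le> xhi - xlo" using assms by linarith
  have e1: "ec * xd \<le> ec * (xhi - xlo)" using mult_left_mono[OF xdb] assms by simp
  have e2: "dEta ec ed * xhi \<le> dEta ec ed * (xhi - xlo)" using mult_left_mono[of xhi "xhi - xlo"] D assms by simp
  have e3: "ec * (xhi - xlo) + dEta ec ed * (xhi - xlo) = (xhi - xlo)/ed"
    using sum by (metis distrib_right times_divide_eq_left mult_1)
  have e4: "dEta ec ed * (xhi - xlo) \<ge> 0" using D assms by simp
  have "ec * (xd - x0) - L - of_bool u1 * dEta ec ed * xhi \<le> ec * xd + (1 - of_bool u1 - of_bool u2) * dEta ec ed * xhi"
    using assms(14) by (cases u1; cases u2; simp add: algebra_simps)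
  also have "\<dots> \<le> (xhi - xlo)/ed"
  proof (cases u1; cases u2)
    assume "\<not>u1" "\<not>u2" then show ?thesis using e1 e2 e3 by simp
  next
    assume "u1" "u2"
    then have "ec * xd + (1 - of_bool u1 - of_bool u2) * dEta ec ed * xhi = ec * xd - dEta ec ed * xhi" by simp
    moreover have "dEta ec ed * xhi \<ge> 0" using D assms by simp
    ultimately show ?thesis using e1 e3 e4 by linarith
  next
    assume "u1" "\<not>u2" then show ?thesis using e1 e3 e4 by simp
  next
    assume "\<not>u1" "u2" then show ?thesis using e1 e3 e4 by simp
  qed
  finally show ?thesis .
qed

lemma termF:
  fixes ec ed xlo xhi x0 xd L :: real
  assumes "0<ec" "ec<1" "0<ed" "ed<1" "xlo\<le>0" "0\<le>xhi" "x0 - xd \<ge> xlo" "L \<ge> 0"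
  shows "ec * (xd - x0) - L \<le> (xhi - xlo)/ed"
proof -
  have "ec*ed \<le> 1" using assms by (simp add: mult_le_one)
  then have "ec \<le> 1/ed" using assms by (simp add: field_simps)
  have "ec * (xd - x0) \<le> ec * (- xlo)" using assms mult_left_mono[of "xd - x0" "-xlo" ec] by simp
  also have "\<dots> \<le> 1/ed * (- xlo)" using mult_right_mono[OF \<open>ec \<le> 1/ed\<close>, of "-xlo"] assms by simp
  also have "\<dots> \<le> (xhi - xlo)/ed" using assms by (simp add: divide_right_mono diff_divide_distrib)
  finally show ?thesis using assms by linarith
qed


theorem proposition9:
  fixes K :: nat and dt T gam ylo yhi xlo xhi ec ed y0 :: real
    and x0 xu xd :: "nat \<Rightarrow> real"
  assumes "K \<ge> 1" and "dt > 0" and "T = real K * dt"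
    and "0 \<le> ylo" and "ylo \<le> yhi" and "xlo \<le> 0" and "0 \<le> xhi"
    and "0 < ec" and "ec < 1" and "0 < ed" and "ed < 1"
    and "y0 \<ge> 0" and "0 \<le> gam" and "gam \<le> T"
    and "feasible_Pbar K dt gam ylo yhi xlo xhi ec ed y0 x0 xu xd al be laL laU LaL LaU u1 u2 u3"
  shows "\<exists>al' be' laL' laU' LaL' LaU' u1' u2'.
           feasible_P K dt gam ylo yhi xlo xhi ec ed y0 x0 xu xd al' be' laL' laU' LaL' LaU' u1' u2'"
proof -
  note F = assms(15)[unfolded feasible_Pbar_def common_constr_def]
  from F have nn: "\<forall>k\<in>{1..K}. xu k \<ge> 0 \<and> xd k \<ge> 0 \<and> laL k \<ge> 0 \<and> laU k \<ge> 0 \<and> (\<forall>l\<in>{1..k}. LaL k l \<ge> 0)"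
    and ca: "\<forall>k\<in>{1..K}. x0 k + xu k \<le> xhi \<and> x0 k - xd k \<ge> xlo"
    and cb: "\<forall>k\<in>{1..K}. y0 - gam * laL k - dt * (\<Sum>l=1..k. al l + LaL k l) \<ge> ylo"
    and cc: "\<forall>k\<in>{1..K}. al k \<ge> ec * x0 k \<and> al k \<ge> x0 k / ed \<and>
        be k \<ge> ec * (x0 k + xu k) \<and> be k \<ge> (x0 k + xu k) / ed"
    and cd: "\<forall>k\<in>{1..K}. \<forall>l\<in>{1..k}. LaL k l + laL k + al l - be l \<ge> 0"
    and ce: "\<forall>k\<in>{1..K}. y0 + gam * laU k + dt * (\<Sum>l=1..k. LaU k l) \<le> yhi"
    and cf: "\<forall>k\<in>{1..K}. LaU k k \<ge> - ec * x0 k \<and> LaU k k \<ge> ec * (xd k - x0 k) - laU k \<and> LaU k k \<ge> 0"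
    and cg: "\<forall>k\<in>{1..K-1}. (1 - of_bool (u1 k)) * xlo \<le> x0 k - xd k \<and> x0 k - xd k \<le> of_bool (u1 k) * xhi \<and>
        of_bool (u2 k) * xlo \<le> x0 k \<and> x0 k \<le> (1 - of_bool (u2 k)) * xhi"
    and ch: "\<forall>k\<in>{1..K}. \<forall>l\<in>{1..<k}.
        LaU k l \<ge> (xd l - x0 l) / ed - laU k + (1 - of_bool (u1 l)) * dEta ec ed * xlo \<and>
        LaU k l \<ge> - x0 l / ed + of_bool (u2 l) * dEta ec ed * xlo \<and>
        LaU k l \<ge> ec * (xd l - x0 l) - laU k - of_bool (u1 l) * dEta ec ed * xhi \<and>
        LaU k l \<ge> - ec * x0 l - (1 - of_bool (u2 l)) * dEta ec ed * xhi"
    and cx: "\<forall>k\<in>{1..K}. \<forall>l\<in>{1..<k}.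
        LaU k l \<ge> - ec * x0 l - (of_bool (u1 l) + 1 - of_bool (u3 l)) * dEta ec ed * xhi \<and>
        LaU k l \<ge> (xd l - x0 l) / ed - laU k + (of_bool (u2 l) + of_bool (u3 l)) * dEta ec ed * xlo"
    by auto
  define M where "M = (xhi - xlo) / ed"
  define laU' where "laU' = (\<lambda>k. min (laU k) M)"
  have M0: "M \<ge> 0" using assms unfolding M_def by simp
  have lam: "\<And>k. k \<in> {1..K} \<Longrightarrow> laU' k \<ge> 0 \<and> laU' k \<le> laU k"
    using nn M0 unfolding laU'_def by auto
  have pres: "\<And>k t L. k \<in> {1..K} \<Longrightarrow> L \<ge> t - laU k \<Longrightarrow> t - L \<le> M \<Longrightarrow> L \<ge> t - laU' k"
    unfolding laU'_def by (simp add: min_def)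
  have lrange: "\<And>k l. k \<in> {1..K} \<Longrightarrow> l \<in> {1..<k} \<Longrightarrow> l \<in> {1..K-1} \<and> l \<in> {1..K}" by auto
  have N1: "\<forall>k\<in>{1..K}. xu k \<ge> 0 \<and> xd k \<ge> 0 \<and> laL k \<ge> 0 \<and> laU' k \<ge> 0 \<and> (\<forall>l\<in>{1..k}. LaL k l \<ge> 0)"
    using nn lam by auto
  have E: "\<forall>k\<in>{1..K}. y0 + gam * laU' k + dt * (\<Sum>l=1..k. LaU k l) \<le> yhi"
  proof
    fix k assume k: "k \<in> {1..K}"
    have "gam * laU' k \<le> gam * laU k" using lam[OF k] assms(13) by (simp add: mult_left_mono)
    then show "y0 + gam * laU' k + dt * (\<Sum>l=1..k. LaU k l) \<le> yhi" using ce k by force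
  qed
  have Ff: "\<forall>k\<in>{1..K}. LaU k k \<ge> - ec * x0 k \<and> LaU k k \<ge> ec * (xd k - x0 k) - laU' k \<and> LaU k k \<ge> 0"
  proof
    fix k assume k: "k \<in> {1..K}"
    have a: "LaU k k \<ge> ec * (xd k - x0 k) - laU k" "LaU k k \<ge> 0" "x0 k - xd k \<ge> xlo" using cf ca k by auto
    have "ec * (xd k - x0 k) - LaU k k \<le> M" unfolding M_def
      using termF[OF assms(8-11,6,7) a(3) a(2)] .
    then show "LaU k k \<ge> - ec * x0 k \<and> LaU k k \<ge> ec * (xd k - x0 k) - laU' k \<and> LaU k k \<ge> 0"
      using pres[OF k a(1)] cf k by auto
  qed
  have H: "\<forall>k\<in>{1..K}. \<forall>l\<in>{1..<k}.
        LaU k l \<ge> (xd l - x0 l) / ed - laU' k + (1 - of_bool (u1 l)) * dEta ec ed * xlo \<and>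
        LaU k l \<ge> - x0 l / ed + of_bool (u2 l) * dEta ec ed * xlo \<and>
        LaU k l \<ge> ec * (xd l - x0 l) - laU' k - of_bool (u1 l) * dEta ec ed * xhi \<and>
        LaU k l \<ge> - ec * x0 l - (1 - of_bool (u2 l)) * dEta ec ed * xhi \<and>
        LaU k l * xd l + laU' k * x0 l \<ge>
          of_bool (u2 l) * (xlo * (xhi - xlo) / ed) - of_bool (u1 l) * (xhi\<^sup>2 / (4 * ed))"
  proof (intro ballI)
    fix k l assume k: "k \<in> {1..K}" and l: "l \<in> {1..<k}"
    have lK: "l \<in> {1..K-1}" "l \<in> {1..K}" using lrange[OF k l] by auto
    have xd0: "xd l \<ge> 0" and xa: "x0 l + xu l \<le> xhi" "x0 l - xd l \<ge> xlo" "xu l \<ge> 0"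
      using nn ca lK(2) by auto
    have x0h: "x0 l \<le> xhi" using xa by linarith
    have g: "(1 - of_bool (u1 l)) * xlo \<le> x0 l - xd l" "x0 l - xd l \<le> of_bool (u1 l) * xhi"
        "of_bool (u2 l) * xlo \<le> x0 l" "x0 l \<le> (1 - of_bool (u2 l)) * xhi"
      using cg lK(1) by auto
    have h: "LaU k l \<ge> (xd l - x0 l) / ed - laU k + (1 - of_bool (u1 l)) * dEta ec ed * xlo"
        "LaU k l \<ge> - x0 l / ed + of_bool (u2 l) * dEta ec ed * xlo"
        "LaU k l \<ge> ec * (xd l - x0 l) - laU k - of_bool (u1 l) * dEta ec ed * xhi"
        "LaU k l \<ge> - ec * x0 l - (1 - of_bool (u2 l)) * dEta ec ed * xhi"
      using ch k l by auto
    have x: "LaU k l \<ge> - ec * x0 l - (of_bool (u1 l) + 1 - of_bool (u3 l)) * dEta ec ed * xhi"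
        "LaU k l \<ge> (xd l - x0 l) / ed - laU k + (of_bool (u2 l) + of_bool (u3 l)) * dEta ec ed * xlo"
      using cx k l by auto
    have tA: "(xd l - x0 l) / ed - LaU k l + (1 - of_bool (u1 l)) * dEta ec ed * xlo \<le> M"
      unfolding M_def using termA[OF assms(8-11,6,7) xd0 x0h xa(2) g h(2)] .
    have tB: "ec * (xd l - x0 l) - LaU k l - of_bool (u1 l) * dEta ec ed * xhi \<le> M"
      unfolding M_def using termB[OF assms(8-11,6,7) xd0 x0h xa(2) g h(4)] .
    have h1': "LaU k l \<ge> (xd l - x0 l) / ed - laU' k + (1 - of_bool (u1 l)) * dEta ec ed * xlo"
      using pres[OF k, of "(xd l - x0 l) / ed + (1 - of_bool (u1 l)) * dEta ec ed * xlo" "LaU k l"] h(1) tA by linarith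
    have h3': "LaU k l \<ge> ec * (xd l - x0 l) - laU' k - of_bool (u1 l) * dEta ec ed * xhi"
      using pres[OF k, of "ec * (xd l - x0 l) - of_bool (u1 l) * dEta ec ed * xhi" "LaU k l"] h(3) tB by linarith
    have lam0: "laU k \<ge> 0" using nn k by auto
    have I: "LaU k l * xd l + laU' k * x0 l \<ge>
          of_bool (u2 l) * (xlo * (xhi - xlo) / ed) - of_bool (u1 l) * (xhi\<^sup>2 / (4 * ed))"
      using lemI[OF assms(8-11,6,7) xd0 x0h xa(2) g lam0 h1' h(2) h3' h(4) x(1) x(2)]
      unfolding laU'_def M_def by simp
    show "LaU k l \<ge> (xd l - x0 l) / ed - laU' k + (1 - of_bool (u1 l)) * dEta ec ed * xlo \<and>
        LaU k l \<ge> - x0 l / ed + of_bool (u2 l) * dEta ec ed * xlo \<and>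
        LaU k l \<ge> ec * (xd l - x0 l) - laU' k - of_bool (u1 l) * dEta ec ed * xhi \<and>
        LaU k l \<ge> - ec * x0 l - (1 - of_bool (u2 l)) * dEta ec ed * xhi \<and>
        LaU k l * xd l + laU' k * x0 l \<ge>
          of_bool (u2 l) * (xlo * (xhi - xlo) / ed) - of_bool (u1 l) * (xhi\<^sup>2 / (4 * ed))"
      using h1' h3' h I by blast
  qed
  have "feasible_P K dt gam ylo yhi xlo xhi ec ed y0 x0 xu xd al be laL laU' LaL LaU u1 u2"
    unfolding feasible_P_def common_constr_def
    using N1 ca cb cc cd E Ff cg H by blast
  then show ?thesis by blast
qed

end
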